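(* Let $M$ be a countable LA-structure which is a model of $\forall_1$-$Th(\mathbb{N})$ (the set of all universal LA-sentences true in $\mathbb{N}$). Then $M$ can be embedded (as an LA-structure) into the reduced power $\mathbb{N}^{\omega}/\mathcal{F}$, where $\mathcal{F}$ is the cofinite filter on $\omega$.
   Context: LA is the first-order language with non-logical symbols $+,\cdot,0,1,\leq$; $\mathbb{N}$ is the standard LA-structure. The reduced power $\mathbb{N}^\omega/\mathcal{F}$ has as elements the classes of functions $f:\omega\to\mathbb{N}$ modulo agreement on a cofinite set, with $+,\cdot$ defined pointwise, $0,1$ the classes of constant functions, and $[f]\le[g]$ iff $f(n)\le g(n)$ for all but finitely many $n$. An embedding is an injective map preserving $0,1,+,\cdot$ and $\leq$. *)

theory Defs
  imports Main "HOL-Library.Countable_Set"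
begin

datatype tm = Var nat | Zero | One | Plus tm tm | Times tm tm

datatype fm = FFalse | Eq tm tm | Le tm tm | Neg fm | Conj fm fm | Disj fm fm
  | Impl fm fm | All nat fm | Ex nat fm

fun fv_tm :: "tm \<Rightarrow> nat set" where
  "fv_tm (Var i) = {i}"
| "fv_tm Zero = {}"
| "fv_tm One = {}"
| "fv_tm (Plus s t) = fv_tm s \<union> fv_tm t"
| "fv_tm (Times s t) = fv_tm s \<union> fv_tm t"

fun fv :: "fm \<Rightarrow> nat set" where
  "fv FFalse = {}"
| "fv (Eq s t) = fv_tm s \<union> fv_tm t"
| "fv (Le s t) = fv_tm s \<union> fv_tm t"
| "fv (Neg p) = fv p"
| "fv (Conj p q) = fv p \<union> fv q"
| "fv (Disj p q) = fv p \<union> fv q"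
| "fv (Impl p q) = fv p \<union> fv q"
| "fv (All i p) = fv p - {i}"
| "fv (Ex i p) = fv p - {i}"

definition sentence :: "fm \<Rightarrow> bool" where
  "sentence p \<longleftrightarrow> fv p = {}"

fun qfree :: "fm \<Rightarrow> bool" where
  "qfree (All i p) = False"
| "qfree (Ex i p) = False"
| "qfree (Neg p) = qfree p"
| "qfree (Conj p q) = (qfree p \<and> qfree q)"
| "qfree (Disj p q) = (qfree p \<and> qfree q)"
| "qfree (Impl p q) = (qfree p \<and> qfree q)"
| "qfree _ = True"

fun universal :: "fm \<Rightarrow> bool" where
  "universal (All i p) = universal p"
| "universal p = qfree p"

record 'a la_struct =
  dom :: "'a set"
  zer :: 'a
  one :: 'a
  pl :: "'a \<Rightarrow> 'a \<Rightarrow> 'a"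
  tms :: "'a \<Rightarrow> 'a \<Rightarrow> 'a"
  leq :: "'a \<Rightarrow> 'a \<Rightarrow> bool"

definition la_structure :: "'a la_struct \<Rightarrow> bool" where
  "la_structure M \<longleftrightarrow> zer M \<in> dom M \<and> one M \<in> dom M \<and>
     (\<forall>x\<in>dom M. \<forall>y\<in>dom M. pl M x y \<in> dom M \<and> tms M x y \<in> dom M)"

fun eval :: "'a la_struct \<Rightarrow> (nat \<Rightarrow> 'a) \<Rightarrow> tm \<Rightarrow> 'a" where
  "eval M e (Var i) = e i"
| "eval M e Zero = zer M"
| "eval M e One = one M"
| "eval M e (Plus s t) = pl M (eval M e s) (eval M e t)"
| "eval M e (Times s t) = tms M (eval M e s) (eval M e t)"

fun sat :: "'a la_struct \<Rightarrow> (nat \<Rightarrow> 'a) \<Rightarrow> fm \<Rightarrow> bool" where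
  "sat M e FFalse = False"
| "sat M e (Eq s t) = (eval M e s = eval M e t)"
| "sat M e (Le s t) = leq M (eval M e s) (eval M e t)"
| "sat M e (Neg p) = (\<not> sat M e p)"
| "sat M e (Conj p q) = (sat M e p \<and> sat M e q)"
| "sat M e (Disj p q) = (sat M e p \<or> sat M e q)"
| "sat M e (Impl p q) = (sat M e p \<longrightarrow> sat M e q)"
| "sat M e (All i p) = (\<forall>a\<in>dom M. sat M (e(i := a)) p)"
| "sat M e (Ex i p) = (\<exists>a\<in>dom M. sat M (e(i := a)) p)"

definition models :: "'a la_struct \<Rightarrow> fm \<Rightarrow> bool" where
  "models M p \<longleftrightarrow> (\<forall>e. (\<forall>i. e i \<in> dom M) \<longrightarrow> sat M e p)"

definition stdN :: "nat la_struct" where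
  "stdN = \<lparr>dom = UNIV, zer = 0, one = 1, pl = (+), tms = (*), leq = (\<le>)\<rparr>"

definition univ_Th_N :: "fm set" where
  "univ_Th_N = {p. sentence p \<and> universal p \<and> models stdN p}"

text \<open>An embedding of M into N^omega/F is given by a choice of representatives
  h x :: nat => nat for each x in the domain; [f] = [g] iff f, g agree cofinitely,
  operations pointwise, and [f] <= [g] iff f n <= g n for cofinitely many n.\<close>
definition embeds_into_reduced_power :: "'a la_struct \<Rightarrow> ('a \<Rightarrow> nat \<Rightarrow> nat) \<Rightarrow> bool" where
  "embeds_into_reduced_power M h \<longleftrightarrow>
     (\<forall>x\<in>dom M. \<forall>y\<in>dom M. (\<forall>\<^sub>F n in cofinite. h x n = h y n) \<longleftrightarrow> x = y) \<and>
     (\<forall>\<^sub>F n in cofinite. h (zer M) n = 0) \<and>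
     (\<forall>\<^sub>F n in cofinite. h (one M) n = 1) \<and>
     (\<forall>x\<in>dom M. \<forall>y\<in>dom M. \<forall>\<^sub>F n in cofinite. h (pl M x y) n = h x n + h y n) \<and>
     (\<forall>x\<in>dom M. \<forall>y\<in>dom M. \<forall>\<^sub>F n in cofinite. h (tms M x y) n = h x n * h y n) \<and>
     (\<forall>x\<in>dom M. \<forall>y\<in>dom M. leq M x y \<longleftrightarrow> (\<forall>\<^sub>F n in cofinite. h x n \<le> h y n))"

end

theory Submission
  imports Defs
begin

fun allq :: "nat list \<Rightarrow> fm \<Rightarrow> fm" where
  "allq [] p = p"
| "allq (i # is) p = All i (allq is p)"

lemma universal_allq: "qfree p \<Longrightarrow> universal (allq vs p)"
proof (induction vs)
  case Nil then show ?case by (cases p) auto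
qed simp

lemma fv_allq: "fv (allq vs p) = fv p - set vs"
  by (induction vs) auto

lemma sat_allq_intro: "(\<And>e. sat X e p) \<Longrightarrow> sat X e (allq vs p)"
  by (induction vs arbitrary: e) auto

lemma sat_allq_elim: "(\<forall>i. e i \<in> dom X) \<Longrightarrow> sat X e (allq vs p) \<Longrightarrow> sat X e p"
proof (induction vs)
  case (Cons i vs)
  then have "\<forall>a\<in>dom X. sat X (e(i := a)) (allq vs p)" by simp
  then have "sat X (e(i := e i)) (allq vs p)" using Cons.prems(1) by blast
  then have "sat X e (allq vs p)" by simp
  then show ?case using Cons by simp
qed simp

definition atl :: "nat \<Rightarrow> nat \<Rightarrow> nat \<Rightarrow> fm list" where
  "atl i j k = [Eq (Var i) Zero, Eq (Var i) One, Eq (Var i) (Var j), Le (Var i) (Var j),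
            Eq (Plus (Var i) (Var j)) (Var k), Eq (Times (Var i) (Var j)) (Var k)]"

definition atoms :: "nat \<Rightarrow> fm list" where
  "atoms m = concat (map (\<lambda>i. concat (map (\<lambda>j. concat (map (\<lambda>k. atl i j k) [0..<m])) [0..<m])) [0..<m])"

lemma atoms_iff: "p \<in> set (atoms m) \<longleftrightarrow> (\<exists>i<m. \<exists>j<m. \<exists>k<m. p \<in> set (atl i j k))"
  unfolding atoms_def by (simp del: atLeastLessThan_iff add: atLeastLessThan_iff[symmetric]) (metis atLeastLessThan_iff zero_le)

lemma atoms_mem:
  assumes "p \<in> set (atl i j k)" and "i < m" "j < m" "k < m"
  shows "p \<in> set (atoms m)"
  using assms unfolding atoms_iff by blast

lemma atoms_props: "p \<in> set (atoms m) \<Longrightarrow> qfree p \<and> fv p \<subseteq> {..<m}"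
  unfolding atoms_iff atl_def by auto

definition lit :: "'a la_struct \<Rightarrow> (nat \<Rightarrow> 'a) \<Rightarrow> fm \<Rightarrow> fm" where
  "lit M e p = (if sat M e p then p else Neg p)"

definition diag :: "'a la_struct \<Rightarrow> (nat \<Rightarrow> 'a) \<Rightarrow> nat \<Rightarrow> fm" where
  "diag M e m = foldr Conj (map (lit M e) (atoms m)) (Neg FFalse)"

lemma sat_foldr: "sat X e (foldr Conj ps (Neg FFalse)) \<longleftrightarrow> (\<forall>p\<in>set ps. sat X e p)"
  by (induction ps) auto

lemma qfree_foldr: "(\<forall>p\<in>set ps. qfree p) \<Longrightarrow> qfree (foldr Conj ps (Neg FFalse))"
  by (induction ps) auto

lemma fv_foldr: "(\<forall>p\<in>set ps. fv p \<subseteq> A) \<Longrightarrow> fv (foldr Conj ps (Neg FFalse)) \<subseteq> A"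
  by (induction ps) auto

lemma diag_self: "sat M e (diag M e m)"
  unfolding diag_def sat_foldr lit_def by auto

lemma diag_qfree: "qfree (diag M e m)"
  unfolding diag_def by (rule qfree_foldr) (auto simp: lit_def dest: atoms_props)

lemma diag_fv: "fv (diag M e m) \<subseteq> {..<m}"
  unfolding diag_def by (rule fv_foldr) (auto simp: lit_def dest!: atoms_props)

lemma diag_atom: "sat X b (diag M e m) \<Longrightarrow> p \<in> set (atoms m) \<Longrightarrow> (sat X b p \<longleftrightarrow> sat M e p)"
proof -
  assume a: "sat X b (diag M e m)" "p \<in> set (atoms m)"
  then have "sat X b (lit M e p)" unfolding diag_def sat_foldr by auto
  then show ?thesis by (auto simp: lit_def split: if_splits)
qed

lemma diag_realized:
  assumes "\<forall>p\<in>univ_Th_N. models M p" and "\<forall>i. e i \<in> dom M"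
  shows "\<exists>b. sat stdN b (diag M e m)"
proof (rule ccontr)
  assume "\<nexists>b. sat stdN b (diag M e m)"
  then have "\<And>b. sat stdN b (Neg (diag M e m))" by simp
  then have "models stdN (allq [0..<m] (Neg (diag M e m)))"
    unfolding models_def by (auto intro: sat_allq_intro)
  moreover have "sentence (allq [0..<m] (Neg (diag M e m)))"
    unfolding sentence_def fv_allq using diag_fv[of M e m] by auto
  moreover have "universal (allq [0..<m] (Neg (diag M e m)))"
    by (rule universal_allq) (simp add: diag_qfree)
  ultimately have "models M (allq [0..<m] (Neg (diag M e m)))"
    using assms(1) unfolding univ_Th_N_def by auto
  then have "sat M e (allq [0..<m] (Neg (diag M e m)))"
    using assms(2) unfolding models_def by auto
  then have "sat M e (Neg (diag M e m))" using sat_allq_elim assms(2) by blast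
  then show False using diag_self[of M e m] by simp
qed

lemma ev_seq: "(\<And>n. n \<ge> N \<Longrightarrow> P n) \<Longrightarrow> \<forall>\<^sub>F n in cofinite. P (n::nat)"
  unfolding cofinite_eq_sequentially eventually_sequentially by blast

theorem mainTheorem3:
  fixes M :: "'a la_struct"
  assumes "la_structure M"
    and "countable (dom M)"
    and "\<forall>p\<in>univ_Th_N. models M p"
  shows "\<exists>h. embeds_into_reduced_power M h"
proof -
  have ne: "dom M \<noteq> {}" using assms(1) unfolding la_structure_def by auto
  define a where "a = from_nat_into (dom M)"
  have ra: "range a = dom M" unfolding a_def using range_from_nat_into[OF ne assms(2)] .
  have ad: "\<forall>i. a i \<in> dom M" using ra by auto
  define idx where "idx x = (LEAST i. a i = x)" for x
  have aidx: "a (idx x) = x" if "x \<in> dom M" for x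
  proof -
    from that ra obtain i where "a i = x" by (metis rangeE)
    then show ?thesis unfolding idx_def by (rule LeastI)
  qed
  define B where "B n = (SOME b. sat stdN b (diag M a (Suc n)))" for n
  have B: "sat stdN (B n) (diag M a (Suc n))" for n
    unfolding B_def using diag_realized[OF assms(3) ad] by (rule someI_ex)
  have key: "sat stdN (B n) p \<longleftrightarrow> sat M a p" if "p \<in> set (atoms (Suc n))" for n p
    using diag_atom[OF B that] .
  have mem: "p \<in> set (atoms (Suc n))"
    if "p \<in> set (atl i j k)"
       "i \<le> n" "j \<le> n" "k \<le> n" for p i j k n
    using that by (intro atoms_mem) auto
  define h where "h x n = B n (idx x)" for x n
  have cl: "pl M x y \<in> dom M" "tms M x y \<in> dom M" if "x \<in> dom M" "y \<in> dom M" for x y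
    using assms(1) that unfolding la_structure_def by auto
  have z: "zer M \<in> dom M" "one M \<in> dom M" using assms(1) unfolding la_structure_def by auto
  have eqv: "(\<forall>\<^sub>F n in cofinite. h x n = h y n) \<longleftrightarrow> x = y" if "x \<in> dom M" "y \<in> dom M" for x y
  proof
    assume ev: "\<forall>\<^sub>F n in cofinite. h x n = h y n"
    show "x = y"
    proof (rule ccontr)
      assume ne: "x \<noteq> y"
      have "\<forall>\<^sub>F n in cofinite. h x n \<noteq> h y n"
      proof (rule ev_seq[of "max (idx x) (idx y)"])
        fix n assume "max (idx x) (idx y) \<le> n"
        then have "sat stdN (B n) (Eq (Var (idx x)) (Var (idx y))) \<longleftrightarrow> sat M a (Eq (Var (idx x)) (Var (idx y)))"
          by (intro key mem[where i="idx x" and j="idx y" and k=0]) (auto simp: atl_def)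
        then show "h x n \<noteq> h y n" using ne aidx that by (simp add: h_def stdN_def)
      qed
      from eventually_conj[OF ev this] obtain N where "\<forall>n\<ge>N. h x n = h y n \<and> h x n \<noteq> h y n"
        unfolding cofinite_eq_sequentially eventually_sequentially by blast
      then show False by blast
    qed
  qed simp
  have le: "leq M x y \<longleftrightarrow> (\<forall>\<^sub>F n in cofinite. h x n \<le> h y n)" if "x \<in> dom M" "y \<in> dom M" for x y
  proof -
    have L: "h x n \<le> h y n \<longleftrightarrow> leq M x y" if "max (idx x) (idx y) \<le> n" for n
    proof -
      have "sat stdN (B n) (Le (Var (idx x)) (Var (idx y))) \<longleftrightarrow> sat M a (Le (Var (idx x)) (Var (idx y)))"
        using that by (intro key mem[where i="idx x" and j="idx y" and k=0]) (auto simp: atl_def)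
      then show ?thesis using aidx \<open>x \<in> dom M\<close> \<open>y \<in> dom M\<close> by (simp add: h_def stdN_def)
    qed
    show ?thesis
    proof
      assume "leq M x y" then show "\<forall>\<^sub>F n in cofinite. h x n \<le> h y n"
        using L by (intro ev_seq[of "max (idx x) (idx y)"]) auto
    next
      assume ev: "\<forall>\<^sub>F n in cofinite. h x n \<le> h y n"
      show "leq M x y"
      proof (rule ccontr)
        assume nl: "\<not> leq M x y"
        have "\<forall>\<^sub>F n in cofinite. \<not> h x n \<le> h y n" using L nl by (intro ev_seq[of "max (idx x) (idx y)"]) auto
        from eventually_conj[OF ev this] obtain N where "\<forall>n\<ge>N. h x n \<le> h y n \<and> \<not> h x n \<le> h y n"
          unfolding cofinite_eq_sequentially eventually_sequentially by blast
        then show False by blast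
      qed
    qed
  qed
  have "\<forall>\<^sub>F n in cofinite. h (zer M) n = 0"
  proof (rule ev_seq[of "idx (zer M)"])
    fix n assume "idx (zer M) \<le> n"
    then have "sat stdN (B n) (Eq (Var (idx (zer M))) Zero) \<longleftrightarrow> sat M a (Eq (Var (idx (zer M))) Zero)"
      by (intro key mem[where i="idx (zer M)" and j=0 and k=0]) (auto simp: atl_def)
    then show "h (zer M) n = 0" using aidx z by (simp add: h_def stdN_def)
  qed
  moreover have "\<forall>\<^sub>F n in cofinite. h (one M) n = 1"
  proof (rule ev_seq[of "idx (one M)"])
    fix n assume "idx (one M) \<le> n"
    then have "sat stdN (B n) (Eq (Var (idx (one M))) One) \<longleftrightarrow> sat M a (Eq (Var (idx (one M))) One)"
      by (intro key mem[where i="idx (one M)" and j=0 and k=0]) (auto simp: atl_def)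
    then show "h (one M) n = 1" using aidx z by (simp add: h_def stdN_def)
  qed
  moreover have "\<forall>\<^sub>F n in cofinite. h (pl M x y) n = h x n + h y n" if "x \<in> dom M" "y \<in> dom M" for x y
  proof (rule ev_seq[of "max (idx x) (max (idx y) (idx (pl M x y)))"])
    fix n assume "max (idx x) (max (idx y) (idx (pl M x y))) \<le> n"
    then have "sat stdN (B n) (Eq (Plus (Var (idx x)) (Var (idx y))) (Var (idx (pl M x y))))
       \<longleftrightarrow> sat M a (Eq (Plus (Var (idx x)) (Var (idx y))) (Var (idx (pl M x y))))"
      by (intro key mem[where i="idx x" and j="idx y" and k="idx (pl M x y)"]) (auto simp: atl_def)
    then show "h (pl M x y) n = h x n + h y n" using aidx cl that by (simp add: h_def stdN_def)
  qed
  moreover have "\<forall>\<^sub>F n in cofinite. h (tms M x y) n = h x n * h y n" if "x \<in> dom M" "y \<in> dom M" for x y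
  proof (rule ev_seq[of "max (idx x) (max (idx y) (idx (tms M x y)))"])
    fix n assume "max (idx x) (max (idx y) (idx (tms M x y))) \<le> n"
    then have "sat stdN (B n) (Eq (Times (Var (idx x)) (Var (idx y))) (Var (idx (tms M x y))))
       \<longleftrightarrow> sat M a (Eq (Times (Var (idx x)) (Var (idx y))) (Var (idx (tms M x y))))"
      by (intro key mem[where i="idx x" and j="idx y" and k="idx (tms M x y)"]) (auto simp: atl_def)
    then show "h (tms M x y) n = h x n * h y n" using aidx cl that by (simp add: h_def stdN_def)
  qed
  ultimately have "embeds_into_reduced_power M h"
    unfolding embeds_into_reduced_power_def using eqv le by blast
  then show ?thesis by blast
qed

end
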